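(* Let $X=(X_n)_{n\in\mathbb{Z}}$ be a stationary and ergodic sequence of integer-valued random variables. Then exactly one of the following holds: (1) the record graph of $X$ is almost surely connected; or (2) almost surely every connected component of the record graph of $X$ is finite.
   Context: For a sequence $x=(x_n)_{n\in\mathbb{Z}}$, the record map is $R_x(i)=\inf\{n>i: \sum_{l=i}^{n-1}x_l\ge0\}$ if this set is nonempty, and $R_x(i)=i$ otherwise. The record graph has vertex set $\mathbb{Z}$ and a directed edge $i\to R_x(i)$ whenever $R_x(i)\ne i$; connectivity and components are understood in the undirected sense. *)

theory Defs
  imports "HOL-Probability.Probability"
begin

definition record_set :: "(int \<Rightarrow> int) \<Rightarrow> int \<Rightarrow> int set" where
  "record_set x i = {n. n > i \<and> (\<Sum>l\<in>{i..<n}. x l) \<ge> 0}"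

definition record_map :: "(int \<Rightarrow> int) \<Rightarrow> int \<Rightarrow> int" where
  "record_map x i = (if record_set x i \<noteq> {} then Inf (record_set x i) else i)"

definition record_edges :: "(int \<Rightarrow> int) \<Rightarrow> (int \<times> int) set" where
  "record_edges x = {(i, record_map x i) | i. record_map x i \<noteq> i}"

definition record_conn :: "(int \<Rightarrow> int) \<Rightarrow> (int \<times> int) set" where
  "record_conn x = (record_edges x \<union> (record_edges x)\<inverse>)\<^sup>*"

definition record_graph_connected :: "(int \<Rightarrow> int) \<Rightarrow> bool" where
  "record_graph_connected x \<longleftrightarrow> (\<forall>i j. (i, j) \<in> record_conn x)"

definition record_component :: "(int \<Rightarrow> int) \<Rightarrow> int \<Rightarrow> int set" where
  "record_component x i = {j. (i, j) \<in> record_conn x}"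

definition record_components_finite :: "(int \<Rightarrow> int) \<Rightarrow> bool" where
  "record_components_finite x \<longleftrightarrow> (\<forall>i. finite (record_component x i))"

abbreviation seq_space :: "(int \<Rightarrow> int) measure" where
  "seq_space \<equiv> PiM UNIV (\<lambda>_. count_space UNIV)"

definition shift :: "(int \<Rightarrow> int) \<Rightarrow> (int \<Rightarrow> int)" where
  "shift x = (\<lambda>n. x (n + 1))"

definition stationary :: "'a measure \<Rightarrow> (int \<Rightarrow> 'a \<Rightarrow> int) \<Rightarrow> bool" where
  "stationary M X \<longleftrightarrow>
     distr M seq_space (\<lambda>\<omega> n. X (n + 1) \<omega>) = distr M seq_space (\<lambda>\<omega> n. X n \<omega>)"

definition ergodic :: "'a measure \<Rightarrow> (int \<Rightarrow> 'a \<Rightarrow> int) \<Rightarrow> bool" where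
  "ergodic M X \<longleftrightarrow>
     (\<forall>A \<in> sets seq_space. shift -` A = A \<longrightarrow>
        measure M {\<omega> \<in> space M. (\<lambda>n. X n \<omega>) \<in> A} \<in> {0, 1})"

end

theory Submission
  imports Defs
begin


lemma sum_split_int:
  fixes f :: "int \<Rightarrow> int"
  assumes "i \<le> j" "j \<le> n"
  shows "(\<Sum>l\<in>{i..<n}. f l) = (\<Sum>l\<in>{i..<j}. f l) + (\<Sum>l\<in>{j..<n}. f l)"
proof -
  have "{i..<n} = {i..<j} \<union> {j..<n}" using assms by auto
  then show ?thesis by (simp add: sum.union_disjoint ivl_disj_int_two(3))
qed

lemma int_least_exists:
  fixes S :: "int set"
  assumes "n \<in> S" "\<And>m. m \<in> S \<Longrightarrow> i \<le> m"
  shows "\<exists>m\<in>S. \<forall>k\<in>S. m \<le> k"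
proof -
  define k where "k = (LEAST k::nat. i + int k \<in> S)"
  have n: "i + int (nat (n - i)) \<in> S" using assms by auto
  have k1: "i + int k \<in> S" unfolding k_def by (rule LeastI[of "\<lambda>k. i + int k \<in> S", OF n])
  have "\<forall>m\<in>S. i + int k \<le> m"
  proof
    fix m assume m: "m \<in> S"
    have "i + int (nat (m - i)) \<in> S" using m assms by auto
    then have "k \<le> nat (m - i)" unfolding k_def by (rule Least_le)
    then show "i + int k \<le> m" using assms(2)[OF m] by linarith
  qed
  then show ?thesis using k1 by blast
qed

lemma record_set_least:
  assumes "record_set x i \<noteq> {}"
  shows "record_map x i \<in> record_set x i" "\<And>n. n \<in> record_set x i \<Longrightarrow> record_map x i \<le> n"
proof -
  obtain n where n: "n \<in> record_set x i" using assms by blast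
  obtain m where m: "m \<in> record_set x i" "\<forall>k\<in>record_set x i. m \<le> k"
    using int_least_exists[OF n, of i] by (auto simp: record_set_def)
  have "Inf (record_set x i) = m" using m by (intro cInf_eq_minimum) auto
  then have e: "record_map x i = m" using assms by (simp add: record_map_def)
  show "record_map x i \<in> record_set x i" using e m by simp
  show "\<And>n. n \<in> record_set x i \<Longrightarrow> record_map x i \<le> n" using e m by simp
qed

lemma record_map_empty: "record_set x i = {} \<Longrightarrow> record_map x i = i"
  by (simp add: record_map_def)

lemma record_map_ge: "record_map x i \<ge> i"
  using record_set_least[of x i] by (cases "record_set x i = {}") (auto simp: record_map_def record_set_def)

lemma record_map_props:
  assumes "record_map x i \<noteq> i"
  shows "record_map x i > i" "(\<Sum>l\<in>{i..<record_map x i}. x l) \<ge> 0"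
    "\<And>n. i < n \<Longrightarrow> n < record_map x i \<Longrightarrow> (\<Sum>l\<in>{i..<n}. x l) < 0"
proof -
  have ne: "record_set x i \<noteq> {}" using assms record_map_empty by metis
  note L = record_set_least[OF ne]
  show "record_map x i > i" "(\<Sum>l\<in>{i..<record_map x i}. x l) \<ge> 0" using L(1) by (auto simp: record_set_def)
  fix n assume "i < n" "n < record_map x i"
  then show "(\<Sum>l\<in>{i..<n}. x l) < 0" using L(2)[of n] by (force simp: record_set_def)
qed

lemma record_map_nested:
  assumes "i < j" "j < record_map x i"
  shows "j < record_map x j" "record_map x j \<le> record_map x i"
proof -
  have ne: "record_map x i \<noteq> i" using assms by auto
  note P = record_map_props[OF ne]
  have "(\<Sum>l\<in>{i..<record_map x i}. x l) = (\<Sum>l\<in>{i..<j}. x l) + (\<Sum>l\<in>{j..<record_map x i}. x l)"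
    using assms by (intro sum_split_int) auto
  then have "(\<Sum>l\<in>{j..<record_map x i}. x l) \<ge> 0" using P(2) P(3)[OF assms] by linarith
  then have mem: "record_map x i \<in> record_set x j" using assms by (simp add: record_set_def)
  then have ne2: "record_set x j \<noteq> {}" by blast
  show "record_map x j \<le> record_map x i" using record_set_least(2)[OF ne2 mem] .
  show "j < record_map x j" using record_set_least(1)[OF ne2] by (simp add: record_set_def)
qed

lemma edge_conn: "record_map x i \<noteq> i \<Longrightarrow> (i, record_map x i) \<in> record_conn x"
  unfolding record_conn_def record_edges_def by auto

lemma conn_sym: "(a, b) \<in> record_conn x \<Longrightarrow> (b, a) \<in> record_conn x"
  unfolding record_conn_def
  by (metis converse_Un converse_converse converse_iff rtrancl_converseI sup_commute)

lemma conn_trans: "(a, b) \<in> record_conn x \<Longrightarrow> (b, c) \<in> record_conn x \<Longrightarrow> (a, c) \<in> record_conn x"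
  unfolding record_conn_def by (rule rtrancl_trans)

lemma interval_conn:
  assumes "i \<le> j" "j \<le> record_map x i"
  shows "(j, record_map x i) \<in> record_conn x"
proof -
  have "\<forall>j. nat (record_map x i - j) = d \<longrightarrow> i < j \<longrightarrow> j \<le> record_map x i \<longrightarrow> (j, record_map x i) \<in> record_conn x" for d
  proof (induction d rule: less_induct)
    case (less d)
    show ?case
    proof (intro allI impI)
      fix j assume d: "nat (record_map x i - j) = d" and j: "i < j" "j \<le> record_map x i"
      show "(j, record_map x i) \<in> record_conn x"
      proof (cases "j = record_map x i")
        case True then show ?thesis by (simp add: record_conn_def)
      next
        case False
        then have j2: "j < record_map x i" using j by simp
        note N = record_map_nested[OF j(1) j2]
        have e: "(j, record_map x j) \<in> record_conn x" using N(1) by (intro edge_conn) simp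
        have "(record_map x j, record_map x i) \<in> record_conn x"
          using less.IH[of "nat (record_map x i - record_map x j)"] N d j by auto
        then show ?thesis using e conn_trans by blast
      qed
    qed
  qed
  then have gt: "i < j \<Longrightarrow> (j, record_map x i) \<in> record_conn x" using assms by blast
  show ?thesis
  proof (cases "i = j")
    case True
    show ?thesis
    proof (cases "record_map x i = i")
      case True then show ?thesis using \<open>i = j\<close> by (simp add: record_conn_def)
    next
      case False then show ?thesis using \<open>i = j\<close> edge_conn by blast
    qed
  next
    case False then show ?thesis using gt assms by simp
  qed
qed

definition cut :: "(int \<Rightarrow> int) \<Rightarrow> int \<Rightarrow> bool" where
  "cut x k \<longleftrightarrow> (\<forall>u\<le>k. record_map x u \<le> k)"

lemma no_cut_connected:
  assumes "\<forall>k. \<not> cut x k"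
  shows "record_graph_connected x"
proof -
  have step: "(k, k + 1) \<in> record_conn x" for k
  proof -
    obtain u where u: "u \<le> k" "record_map x u > k" using assms unfolding cut_def by force
    have "(k, record_map x u) \<in> record_conn x" using u by (intro interval_conn) auto
    moreover have "(k + 1, record_map x u) \<in> record_conn x" using u by (intro interval_conn) auto
    ultimately show ?thesis using conn_sym conn_trans by blast
  qed
  have up: "(i, i + int n) \<in> record_conn x" for i n
  proof (induction n)
    case 0 then show ?case by (simp add: record_conn_def)
  next
    case (Suc n)
    have "i + int (Suc n) = (i + int n) + 1" by simp
    then show ?case using step[of "i + int n"] conn_trans Suc by metis
  qed
  show ?thesis unfolding record_graph_connected_def
  proof (intro allI)
    fix i j
    show "(i, j) \<in> record_conn x"
    proof (cases "i \<le> j")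
      case True then show ?thesis using up[of i "nat (j - i)"] by simp
    next
      case False then show ?thesis using up[of j "nat (i - j)"] conn_sym by simp
    qed
  qed
qed

lemma cuts_finite:
  assumes a: "cut x a" and b: "cut x b" and i: "a < i" "i \<le> b"
  shows "finite (record_component x i)"
proof -
  have closed: "a < v \<and> v \<le> b" if "(u, v) \<in> record_conn x" "a < u \<and> u \<le> b" for u v
    using that unfolding record_conn_def
  proof (induction rule: rtrancl_induct)
    case base then show ?case by simp
  next
    case (step y z)
    then have yz: "a < y" "y \<le> b" by auto
    from step(2) consider "(y, z) \<in> record_edges x" | "(z, y) \<in> record_edges x" by blast
    then show ?case
    proof cases
      case 1
      then have z: "z = record_map x y" "record_map x y \<noteq> y" by (auto simp: record_edges_def)
      have "z > y" using z record_map_ge[where x=x and i=y] by simp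
      moreover have "z \<le> b" using b yz z unfolding cut_def by auto
      ultimately show ?thesis using yz by simp
    next
      case 2
      then have z: "y = record_map x z" "record_map x z \<noteq> z" by (auto simp: record_edges_def)
      have "z < y" using z record_map_ge[where x=x and i=z] by simp
      moreover have "a < z"
      proof (rule ccontr)
        assume "\<not> a < z"
        then have "record_map x z \<le> a" using a unfolding cut_def by auto
        then show False using z yz by simp
      qed
      ultimately show ?thesis using yz by simp
    qed
  qed
  have "record_component x i \<subseteq> {a<..b}"
    using closed i by (auto simp: record_component_def)
  then show ?thesis by (rule finite_subset) simp
qed

lemma connected_not_finite:
  assumes "record_graph_connected x" shows "\<not> record_components_finite x"
proof -
  have "record_component x 0 = UNIV" using assms
    by (auto simp: record_component_def record_graph_connected_def)
  then show ?thesis unfolding record_components_finite_def using infinite_UNIV_int by metis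
qed


lemma sum_shift_int:
  fixes x :: "int \<Rightarrow> int"
  shows "(\<Sum>l\<in>{i..<n}. x (l + 1)) = (\<Sum>l\<in>{i+1..<n+1}. x l)"
proof -
  have "{i+1..<n+1} = (\<lambda>l. l + 1) ` {i..<n}"
    by (auto simp: image_iff intro!: bexI[where x="_ - 1"])
  moreover have "sum x ((\<lambda>l. l + 1) ` {i..<n}) = (\<Sum>l\<in>{i..<n}. x (l + 1))"
    by (subst sum.reindex) (auto simp: inj_on_def)
  ultimately show ?thesis by metis
qed

lemma record_set_shift: "n \<in> record_set (shift x) i \<longleftrightarrow> n + 1 \<in> record_set x (i + 1)"
  unfolding record_set_def shift_def using sum_shift_int[of x i n] by auto

lemma record_map_shift: "record_map (shift x) i = record_map x (i + 1) - 1"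
proof (cases "record_set x (i + 1) = {}")
  case True
  then have "record_set (shift x) i = {}" using record_set_shift by blast
  then show ?thesis using True by (simp add: record_map_empty)
next
  case False
  note L = record_set_least[OF False]
  have mem: "record_map x (i + 1) - 1 \<in> record_set (shift x) i" using L(1) record_set_shift by simp
  then have ne: "record_set (shift x) i \<noteq> {}" by blast
  note L2 = record_set_least[OF ne]
  have "record_map (shift x) i \<le> record_map x (i + 1) - 1" using L2(2)[OF mem] .
  moreover have "record_map x (i + 1) \<le> record_map (shift x) i + 1"
    using L(2) L2(1) record_set_shift by blast
  ultimately show ?thesis by simp
qed

lemma cut_shift: "cut (shift x) k \<longleftrightarrow> cut x (k + 1)"
proof
  assume c: "cut (shift x) k"
  show "cut x (k + 1)" unfolding cut_def
  proof (intro allI impI)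
    fix u :: int assume "u \<le> k + 1"
    then have "record_map (shift x) (u - 1) \<le> k" using c unfolding cut_def by simp
    then show "record_map x u \<le> k + 1" by (simp add: record_map_shift)
  qed
next
  assume c: "cut x (k + 1)"
  show "cut (shift x) k" unfolding cut_def
  proof (intro allI impI)
    fix u :: int assume "u \<le> k"
    then have "record_map x (u + 1) \<le> k + 1" using c unfolding cut_def by simp
    then show "record_map (shift x) u \<le> k" by (simp add: record_map_shift)
  qed
qed

lemma cut_iff:
  "cut x k \<longleftrightarrow> (\<forall>u. u \<le> k \<longrightarrow> ((\<forall>n. u < n \<longrightarrow> (\<Sum>l\<in>{u..<n}. x l) < 0) \<or>
      (\<exists>n. u < n \<and> n \<le> k \<and> (\<Sum>l\<in>{u..<n}. x l) \<ge> 0)))"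
proof -
  have "record_map x u \<le> k \<longleftrightarrow> ((\<forall>n. u < n \<longrightarrow> (\<Sum>l\<in>{u..<n}. x l) < 0) \<or>
      (\<exists>n. u < n \<and> n \<le> k \<and> (\<Sum>l\<in>{u..<n}. x l) \<ge> 0))" if "u \<le> k" for u
  proof (cases "record_set x u = {}")
    case True
    then show ?thesis using that by (auto simp: record_map_empty record_set_def not_le)
  next
    case False
    note L = record_set_least[OF False]
    have nall: "\<not> (\<forall>n. u < n \<longrightarrow> (\<Sum>l\<in>{u..<n}. x l) < 0)" using False by (auto simp: record_set_def)
    show ?thesis
    proof
      assume "record_map x u \<le> k" then show "((\<forall>n. u < n \<longrightarrow> (\<Sum>l\<in>{u..<n}. x l) < 0) \<or>
      (\<exists>n. u < n \<and> n \<le> k \<and> (\<Sum>l\<in>{u..<n}. x l) \<ge> 0))" using L(1) by (auto simp: record_set_def)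
    next
      assume "((\<forall>n. u < n \<longrightarrow> (\<Sum>l\<in>{u..<n}. x l) < 0) \<or>
      (\<exists>n. u < n \<and> n \<le> k \<and> (\<Sum>l\<in>{u..<n}. x l) \<ge> 0))"
      then obtain n where "u < n" "n \<le> k" "(\<Sum>l\<in>{u..<n}. x l) \<ge> 0" using nall by blast
      then show "record_map x u \<le> k" using L(2)[of n] by (auto simp: record_set_def)
    qed
  qed
  then show ?thesis unfolding cut_def by (simp cong: imp_cong)
qed

lemma sum_meas:
  assumes "finite I"
  shows "(\<lambda>x. \<Sum>l\<in>I. x l) \<in> measurable seq_space (count_space (UNIV :: int set))"
  using assms
proof (induction I rule: finite_induct)
  case empty then show ?case by simp
next
  case (insert a F)
  have h1: "(\<lambda>x. v + (\<Sum>l\<in>F. x l)) \<in> measurable seq_space (count_space UNIV)" for v :: int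
      using measurable_compose[OF insert.IH, of "\<lambda>s. v + s" "count_space UNIV"] by simp
  have h2: "(\<lambda>x. x a) \<in> measurable seq_space (count_space (UNIV :: int set))" by simp
  have "(\<lambda>x. (\<lambda>v x. v + (\<Sum>l\<in>F. x l)) (x a) x) \<in> measurable seq_space (count_space UNIV)"
    using measurable_compose_countable[where f="\<lambda>v x. v + (\<Sum>l\<in>F. x l)", OF h1 h2] .
  then show ?case using insert by simp
qed


lemma pred_sum_neg[measurable]: "Measurable.pred seq_space (\<lambda>x. (\<Sum>l\<in>{u..<n::int}. x l) < (0::int))"
proof -
  have "(\<lambda>s::int. s < 0) \<in> measurable (count_space UNIV) (count_space UNIV)" by simp
  from measurable_compose[OF sum_meas[of "{u..<n}"] this] show ?thesis by simp
qed

lemma pred_sum_nonneg[measurable]: "Measurable.pred seq_space (\<lambda>x. (\<Sum>l\<in>{u..<n::int}. x l) \<ge> (0::int))"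
proof -
  have "(\<lambda>s::int. s \<ge> 0) \<in> measurable (count_space UNIV) (count_space UNIV)" by simp
  from measurable_compose[OF sum_meas[of "{u..<n}"] this] show ?thesis by simp
qed

lemma pred_cut[measurable]: "Measurable.pred seq_space (\<lambda>x. cut x k)"
  unfolding cut_iff by measurable

lemma shift_meas[measurable]: "shift \<in> measurable seq_space seq_space"
  unfolding shift_def by (rule measurable_PiM_single') auto

lemma space_seq: "space seq_space = UNIV"
  by (simp add: space_PiM)

lemma shift_null:
  fixes D :: "int \<Rightarrow> 'b set"
  assumes P: "prob_space P" and inv: "\<And>n. measure P (D (n + 1)) = measure P (D n)"
    and meas: "\<And>n. D n \<in> sets P" and disj: "\<And>n m. n \<noteq> m \<Longrightarrow> D n \<inter> D m = {}"
  shows "measure P (D n) = 0"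
proof -
  interpret prob_space P by fact
  have eq: "measure P (D (n + int k)) = measure P (D n)" for n k
  proof (induction k)
    case 0 then show ?case by simp
  next
    case (Suc k)
    have e: "n + int (Suc k) = (n + int k) + 1" by simp
    show ?case unfolding e using inv[of "n + int k"] Suc by simp
  qed
  have all: "measure P (D m) = measure P (D 0)" for m
  proof (cases "m \<ge> 0")
    case True then show ?thesis using eq[of 0 "nat m"] by simp
  next
    case False then show ?thesis using eq[of m "nat (- m)"] by simp
  qed
  define c where "c = measure P (D 0)"
  have bound: "real N * c \<le> 1" for N
  proof -
    have "measure P (\<Union>k\<in>{..<N}. D (int k)) = (\<Sum>k\<in>{..<N}. measure P (D (int k)))"
      by (rule finite_measure_finite_Union) (auto simp: meas disjoint_family_on_def disj)
    also have "\<dots> = real N * c" using all by (simp add: c_def[symmetric])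
    finally show ?thesis using prob_le_1 by metis
  qed
  have "c = 0"
  proof (rule ccontr)
    assume "c \<noteq> 0"
    then have "c > 0" unfolding c_def using measure_nonneg by (metis less_eq_real_def)
    then obtain N where "1 < real N * c" using reals_Archimedean3 by blast
    then show False using bound[of N] by simp
  qed
  then show ?thesis using all c_def by simp
qed

lemma cuts_unbounded_finite:
  assumes k0: "cut x k0" and up: "\<forall>n. \<not> (cut x n \<and> (\<forall>k>n. \<not> cut x k))"
    and down: "\<forall>n. \<not> (cut x n \<and> (\<forall>k<n. \<not> cut x k))"
  shows "record_components_finite x"
proof -
  have U: "\<exists>k. k \<ge> k0 + int N \<and> cut x k" for N
  proof (induction N)
    case 0 then show ?case using k0 by auto
  next
    case (Suc N)
    then obtain k where k: "k \<ge> k0 + int N" "cut x k" by blast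
    then obtain k' where "k' > k" "cut x k'" using up by blast
    then show ?case using k by (intro exI[of _ k']) auto
  qed
  have Dn: "\<exists>k. k \<le> k0 - int N \<and> cut x k" for N
  proof (induction N)
    case 0 then show ?case using k0 by auto
  next
    case (Suc N)
    then obtain k where k: "k \<le> k0 - int N" "cut x k" by blast
    then obtain k' where "k' < k" "cut x k'" using down by blast
    then show ?case using k by (intro exI[of _ k']) auto
  qed
  show ?thesis unfolding record_components_finite_def
  proof
    fix i
    obtain b where b: "b \<ge> k0 + int (nat (i - k0))" "cut x b" using U by blast
    obtain a where a: "a \<le> k0 - int (nat (k0 - i + 1))" "cut x a" using Dn by blast
    have "a < i" using a(1) by (cases "0 \<le> k0 - i + 1") auto
    moreover have "i \<le> b" using b(1) by (cases "k0 \<le> i") auto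
    ultimately show "finite (record_component x i)" using cuts_finite[OF a(2) b(2)] by simp
  qed
qed

theorem corollary3p5:
  fixes M :: "'a measure" and X :: "int \<Rightarrow> 'a \<Rightarrow> int"
  assumes "prob_space M"
    and "\<And>n. X n \<in> measurable M (count_space UNIV)"
    and "stationary M X"
    and "ergodic M X"
  shows "((AE \<omega> in M. record_graph_connected (\<lambda>n. X n \<omega>)) \<and>
            \<not> (AE \<omega> in M. record_components_finite (\<lambda>n. X n \<omega>)))
       \<or> (\<not> (AE \<omega> in M. record_graph_connected (\<lambda>n. X n \<omega>)) \<and>
            (AE \<omega> in M. record_components_finite (\<lambda>n. X n \<omega>)))"
proof -
  interpret M: prob_space M by fact
  define Xv where "Xv = (\<lambda>\<omega> n. X n \<omega>)"
  have Xv_meas: "Xv \<in> measurable M seq_space" unfolding Xv_def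
    by (rule measurable_PiM_single') (auto simp: assms(2))
  define P where "P = distr M seq_space Xv"
  interpret P: prob_space P unfolding P_def by (rule M.prob_space_distr[OF Xv_meas])
  have spP: "space P = UNIV" unfolding P_def by (simp add: space_seq)
  have setsP: "sets P = sets seq_space" by (simp add: P_def)
  have stat: "distr P seq_space shift = P"
  proof -
    have "distr P seq_space shift = distr M seq_space (shift \<circ> Xv)"
      unfolding P_def by (rule distr_distr[OF shift_meas Xv_meas])
    also have "shift \<circ> Xv = (\<lambda>\<omega> n. X (n + 1) \<omega>)" by (auto simp: shift_def Xv_def fun_eq_iff)
    also have "distr M seq_space (\<lambda>\<omega> n. X (n + 1) \<omega>) = P"
      using assms(3) unfolding stationary_def P_def Xv_def by simp
    finally show ?thesis .
  qed
  have inv: "measure P (shift -` A) = measure P A" if "A \<in> sets seq_space" for A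
  proof -
    have "measure P A = measure (distr P seq_space shift) A" using stat by simp
    also have "\<dots> = measure P (shift -` A \<inter> space P)"
      by (rule measure_distr) (auto simp: P_def that)
    finally show ?thesis using spP by simp
  qed
  define C where "C = {x. \<exists>k. cut x k}"
  have Cmeas: "C \<in> sets seq_space"
  proof -
    have "{x \<in> space seq_space. \<exists>k. cut x k} \<in> sets seq_space" by measurable
    then show ?thesis unfolding C_def by (simp add: space_seq)
  qed
  have Cinv: "shift -` C = C"
  proof -
    have "(\<exists>k. cut x (k + 1)) \<longleftrightarrow> (\<exists>k. cut x k)" for x
      by (metis diff_add_cancel)
    moreover have "cut (shift x) = (\<lambda>k. cut x (k + 1))" for x by (rule ext) (simp add: cut_shift)
    ultimately show ?thesis unfolding C_def by auto
  qed
  have "measure M {\<omega> \<in> space M. Xv \<omega> \<in> C} \<in> {0, 1}"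
    using assms(4) Cmeas Cinv unfolding ergodic_def Xv_def by blast
  moreover have "measure P C = measure M {\<omega> \<in> space M. Xv \<omega> \<in> C}"
    unfolding P_def by (subst measure_distr[OF Xv_meas Cmeas]) (auto intro: arg_cong[where f="measure M"])
  ultimately have mC: "measure P C = 0 \<or> measure P C = 1" by simp
  have nboth: "\<not> ((AE \<omega> in M. record_graph_connected (\<lambda>n. X n \<omega>)) \<and>
            (AE \<omega> in M. record_components_finite (\<lambda>n. X n \<omega>)))"
  proof
    assume A: "(AE \<omega> in M. record_graph_connected (\<lambda>n. X n \<omega>)) \<and>
            (AE \<omega> in M. record_components_finite (\<lambda>n. X n \<omega>))"
    have "AE \<omega> in M. False" using conjunct1[OF A] conjunct2[OF A]
      by eventually_elim (use connected_not_finite in blast)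
    then show False by simp
  qed
  from mC show ?thesis
  proof
    assume m0: "measure P C = 0"
    have "C \<in> null_sets P" using m0 Cmeas setsP by (intro null_setsI) (auto simp: P.emeasure_eq_measure)
    then have "AE x in P. x \<notin> C" by (rule AE_not_in)
    then have "AE x in P. record_graph_connected x"
      by eventually_elim (auto simp: C_def intro: no_cut_connected)
    then have "AE \<omega> in M. record_graph_connected (Xv \<omega>)" unfolding P_def by (rule AE_distrD[OF Xv_meas])
    then have "AE \<omega> in M. record_graph_connected (\<lambda>n. X n \<omega>)" by (simp add: Xv_def)
    then show ?thesis using nboth by blast
  next
    assume m1: "measure P C = 1"
    have aeC: "AE x in P. x \<in> C" using m1 by (rule P.AE_prob_1)
    define D where "D n = {x. cut x n \<and> (\<forall>k>n. \<not> cut x k)}" for n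
    define E where "E n = {x. cut x n \<and> (\<forall>k<n. \<not> cut x k)}" for n
    have Dm: "D n \<in> sets seq_space" for n
    proof -
      have "{x \<in> space seq_space. cut x n \<and> (\<forall>k>n. \<not> cut x k)} \<in> sets seq_space" by measurable
      then show ?thesis unfolding D_def by (simp add: space_seq)
    qed
    have Em: "E n \<in> sets seq_space" for n
    proof -
      have "{x \<in> space seq_space. cut x n \<and> (\<forall>k<n. \<not> cut x k)} \<in> sets seq_space" by measurable
      then show ?thesis unfolding E_def by (simp add: space_seq)
    qed
    have Dshift: "shift -` D n = D (n + 1)" for n
    proof -
      have "(\<forall>k>n. \<not> cut x (k + 1)) \<longleftrightarrow> (\<forall>k>n + 1. \<not> cut x k)" for x
        by (metis add.commute add_less_cancel_left diff_add_cancel)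
      then show ?thesis unfolding D_def by (auto simp: cut_shift)
    qed
    have Eshift: "shift -` E n = E (n + 1)" for n
    proof -
      have "(\<forall>k<n. \<not> cut x (k + 1)) \<longleftrightarrow> (\<forall>k<n + 1. \<not> cut x k)" for x
        by (metis add.commute add_less_cancel_left diff_add_cancel)
      then show ?thesis unfolding E_def by (auto simp: cut_shift)
    qed
    have D0: "measure P (D n) = 0" for n
    proof (rule shift_null[where D=D])
      show "prob_space P" by unfold_locales
      show "measure P (D (n + 1)) = measure P (D n)" for n using inv[OF Dm[of n]] Dshift by simp
      show "D n \<in> sets P" for n using Dm setsP by simp
      show "D n \<inter> D m = {}" if "n \<noteq> m" for n m
        using that unfolding D_def by (auto simp: neq_iff)
    qed
    have E0: "measure P (E n) = 0" for n
    proof (rule shift_null[where D=E])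
      show "prob_space P" by unfold_locales
      show "measure P (E (n + 1)) = measure P (E n)" for n using inv[OF Em[of n]] Eshift by simp
      show "E n \<in> sets P" for n using Em setsP by simp
      show "E n \<inter> E m = {}" if "n \<noteq> m" for n m
        using that unfolding E_def by (auto simp: neq_iff)
    qed
    have "AE x in P. x \<notin> D n" for n
      using D0[of n] Dm[of n] setsP by (intro AE_not_in null_setsI) (auto simp: P.emeasure_eq_measure)
    then have aeD: "AE x in P. \<forall>n. x \<notin> D n" by (simp add: AE_all_countable)
    have "AE x in P. x \<notin> E n" for n
      using E0[of n] Em[of n] setsP by (intro AE_not_in null_setsI) (auto simp: P.emeasure_eq_measure)
    then have aeE: "AE x in P. \<forall>n. x \<notin> E n" by (simp add: AE_all_countable)
    have "AE x in P. record_components_finite x"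
      using aeC aeD aeE
    proof eventually_elim
      case (elim x)
      then obtain k0 where "cut x k0" by (auto simp: C_def)
      then show ?case using elim by (intro cuts_unbounded_finite[of x k0]) (auto simp: D_def E_def)
    qed
    then have "AE \<omega> in M. record_components_finite (Xv \<omega>)" unfolding P_def by (rule AE_distrD[OF Xv_meas])
    then have "AE \<omega> in M. record_components_finite (\<lambda>n. X n \<omega>)" by (simp add: Xv_def)
    then show ?thesis using nboth by blast
  qed
qed
end
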